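(* For every positive integer $t$, setting $n=3\cdot 2^{2t-1}+1$, there exists an equiangular set of $\frac{2}{9}(n-1)(n+2)$ lines in $\mathbb{R}^n$.
   Context: A set of lines in $\mathbb{R}^n$ (or $\mathbb{C}^n$) spanned by unit vectors $v_1,\dots,v_r$ is equiangular if there is a constant $c$ such that $|\langle v_i,v_j\rangle|=c$ for all $1\le i<j\le r$. *)

theory Defs
  imports Complex_Main
begin

text \<open>Vectors of R^n are represented as functions nat => real vanishing outside {0..<n};
  the standard inner product is the sum over the coordinates below n.\<close>

definition rvec :: "nat \<Rightarrow> (nat \<Rightarrow> real) set" where
  "rvec n = {v. \<forall>k\<ge>n. v k = 0}"

definition ip :: "nat \<Rightarrow> (nat \<Rightarrow> real) \<Rightarrow> (nat \<Rightarrow> real) \<Rightarrow> real" where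
  "ip n v w = (\<Sum>k<n. v k * w k)"

text \<open>A set of lines in R^n, given by a set V of spanning unit vectors (one per line, so
  no two are equal or opposite), is equiangular if all pairwise absolute inner products agree.\<close>

definition equiangular_lines :: "nat \<Rightarrow> (nat \<Rightarrow> real) set \<Rightarrow> bool" where
  "equiangular_lines n V \<longleftrightarrow>
     V \<subseteq> rvec n \<and>
     (\<forall>v\<in>V. ip n v v = 1) \<and>
     (\<forall>v\<in>V. \<forall>w\<in>V. v \<noteq> w \<longrightarrow> w \<noteq> (\<lambda>k. - v k)) \<and>
     (\<exists>c. \<forall>v\<in>V. \<forall>w\<in>V. v \<noteq> w \<longrightarrow> \<bar>ip n v w\<bar> = c)"

end

theory Submission
  imports Defs "HOL-Algebra.Algebraic_Closure_Type" "HOL-Library.Z2" "HOL-Library.Product_Plus"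
begin


type_synonym K = "bit alg_closure"

lemma two_K: "(2::K) = 0"
proof -
  have "(2::K) = to_ac (2::bit)" by (simp only: to_ac_numeral)
  also have "(2::bit) = 0" by simp
  finally show ?thesis by simp
qed

lemma card_roots_K:
  fixes N :: nat
  assumes "even N" "N \<ge> 2"
  shows "card {x::K. x ^ N = x} = N"
proof -
  define p :: "K poly" where "p = monom 1 N - [:0,1:]"
  have deg: "degree p = N" using assms unfolding p_def diff_conv_add_uminus
    by (subst degree_add_eq_left) (auto simp: degree_monom_eq)
  hence p0: "p \<noteq> 0" using assms by auto
  have lc: "lead_coeff p = 1" using assms deg unfolding p_def
    by (cases N) (simp_all add: coeff_monom coeff_pCons split: nat.splits)
  have ofN: "(of_nat N :: K) = 0"
    using assms(1) two_K by (metis dvdE mult_zero_left of_nat_mult of_nat_numeral)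
  have dp: "pderiv p = -1" unfolding p_def
    by (simp add: pderiv_monom pderiv_diff ofN pderiv_pCons one_pCons)
  obtain A where A: "size A = N" "p = smult 1 (\<Prod>x\<in>#A. [:-x, 1:])"
    using alg_closed_imp_factorization[OF p0] deg lc by metis
  have roots: "{x::K. x ^ N = x} = set_mset A"
  proof -
    have "poly p x = 0 \<longleftrightarrow> x \<in># A" for x
      by (subst A(2)) (auto simp: poly_prod_mset prod_mset_zero_iff)
    moreover have "poly p x = 0 \<longleftrightarrow> x ^ N = x" for x
      by (simp add: p_def poly_monom)
    ultimately show ?thesis by auto
  qed
  have cnt: "count A x \<le> 1" for x
  proof (rule ccontr)
    assume "\<not> count A x \<le> 1"
    hence "{#x,x#} \<subseteq># A" by (simp add: subseteq_mset_def)
    then obtain B where B: "A = {#x,x#} + B" by (metis subset_mset.add_diff_inverse)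
    have "p = [:-x,1:]^2 * (\<Prod>y\<in>#B. [:-y, 1:])"
      using A(2) B by (simp add: power2_eq_square mult.assoc del: mult_pCons_left mult_pCons_right)
    hence "poly (pderiv p) x = 0"
      by (simp add: pderiv_mult pderiv_power)
    thus False using dp by simp
  qed
  have "size A = card (set_mset A)"
    by (subst size_multiset_overloaded_eq) (metis (no_types, lifting) card_eq_sum cnt count_eq_zero_iff le_antisym less_one not_le sum.cong)
  thus ?thesis using roots A(1) by simp
qed




definition sg :: "'a::field \<Rightarrow> real" where "sg x = (if x = 0 then 1 else -1)"

locale kerdock =
  fixes FF :: "'a::field set" and m h :: nat
  assumes two: "(2::'a) = 0" and mh: "m = 2*h+1" and FF_def: "FF = {x. x^(2^m) = x}"
begin

lemma add_self[simp]: "(x::'a) + x = 0"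
  by (metis mult_2 mult_zero_left two)

lemma neg_id[simp]: "- (x::'a) = x"
  by (metis add_self add.commute add_diff_cancel diff_minus_eq_add diff_0)

lemma sg_add: "(x::'a) \<in> {0,1} \<Longrightarrow> y \<in> {0,1} \<Longrightarrow> sg (x + y) = sg x * sg y"
  by (auto simp: sg_def)

lemma sg_sq: "sg x * sg x = 1" by (simp add: sg_def)

lemma b01_add: "x \<in> {0,1::'a} \<Longrightarrow> y \<in> {0,1} \<Longrightarrow> x + y \<in> {0,1}"
  by auto

lemma b01_mult: "x \<in> {0,1::'a} \<Longrightarrow> y \<in> {0,1} \<Longrightarrow> x * y \<in> {0,1}"
  by auto

lemma b01_sum: "(\<And>i. i \<in> A \<Longrightarrow> f i \<in> {0,1::'a}) \<Longrightarrow> sum f A \<in> {0,1}"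
proof (induction A rule: infinite_finite_induct)
  case (insert x F)
  hence "f x \<in> {0,1}" "sum f F \<in> {0,1}" by auto
  thus ?case using insert(1,2) b01_add by simp
qed auto

lemma pp: "((x::'a)^(2^a))^(2^b) = x^(2^(a+b))"
  by (simp add: power_mult[symmetric] power_add)

lemma pp2: "((x::'a)^(2^a))^2 = x^(2^(Suc a))"
  using pp[of x a 1] by simp

lemma frob: "((x::'a) + y) ^ (2^k) = x^(2^k) + y^(2^k)"
proof (induction k)
  case (Suc k)
  have "(x+y)^(2^Suc k) = ((x+y)^(2^k))^2" by (simp only: pp2)
  also have "\<dots> = (x^(2^k))^2 + (y^(2^k))^2" unfolding Suc power2_sum by (simp add: two)
  also have "\<dots> = x^(2^Suc k) + y^(2^Suc k)" by (simp only: pp2)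
  finally show ?case .
qed simp

lemma frob_sum: "(sum (f::_\<Rightarrow>'a) A) ^ (2^k) = (\<Sum>i\<in>A. (f i)^(2^k))"
  by (induction A rule: infinite_finite_induct) (auto simp: frob)

lemma inF: "x \<in> FF \<longleftrightarrow> x^(2^m) = x" by (simp add: FF_def)

lemma F_add: "x \<in> FF \<Longrightarrow> y \<in> FF \<Longrightarrow> x + y \<in> FF" by (simp add: inF frob)
lemma F_mult: "x \<in> FF \<Longrightarrow> y \<in> FF \<Longrightarrow> x * y \<in> FF" by (simp add: inF power_mult_distrib)
lemma F_inv: "x \<in> FF \<Longrightarrow> inverse x \<in> FF" by (simp add: inF power_inverse)
lemma F_0: "0 \<in> FF" by (simp add: inF)
lemma F_1: "1 \<in> FF" by (simp add: inF)
lemma F_pow: assumes "x \<in> FF" shows "x ^ k \<in> FF"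
proof -
  have "(x^k)^(2^m) = (x^(2^m))^k" by (metis power_mult mult.commute)
  thus ?thesis using assms by (simp add: inF)
qed

definition Tr :: "'a \<Rightarrow> 'a" where "Tr x = (\<Sum>i<m. x^(2^i))"

lemma Tr_add: "Tr (x + y) = Tr x + Tr y" by (simp add: Tr_def frob sum.distrib)
lemma Tr_0[simp]: "Tr 0 = 0" by (simp add: Tr_def zero_power)
lemma Tr_1: "Tr 1 = 1"
proof -
  have "Tr 1 = of_nat m" by (simp add: Tr_def)
  also have "\<dots> = 2 * of_nat h + 1" by (simp add: mh)
  finally show ?thesis by (simp add: two)
qed

lemma pp3: "((x::'a)^2)^(2^i) = x^(2^Suc i)"
  by (simp add: power_mult[symmetric])

lemma Tr_sq_pow: "(Tr x)^2 = Tr (x^2)"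
  using frob_sum[of "\<lambda>i. x^(2^i)" "{..<m}" 1]
  by (simp add: Tr_def pp2 pp3 del: power_Suc)

lemma Tr_sq: assumes "x \<in> FF" shows "Tr (x^2) = Tr x"
proof -
  obtain m' where m': "m = Suc m'" using mh by auto
  have xm: "x^(2^m) = x" using assms by (simp add: inF)
  have "Tr (x^2) = (\<Sum>i<m. x^(2^Suc i))"
    unfolding Tr_def by (intro sum.cong refl) (metis pp power_one_right power_mult plus_1_eq_Suc add.commute)
  also have "\<dots> = (\<Sum>i<m'. x^(2^Suc i)) + x^(2^m)" by (simp add: m')
  also have "\<dots> = x^(2^0) + (\<Sum>i<m'. x^(2^Suc i))" using xm by simp
  also have "\<dots> = Tr x" unfolding Tr_def by (simp only: m' sum.lessThan_Suc_shift)
  finally show ?thesis .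
qed

lemma Tr01: assumes "x \<in> FF" shows "Tr x \<in> {0,1}"
proof -
  have "Tr x * Tr x = Tr x" using Tr_sq_pow[of x] Tr_sq[OF assms] by (simp add: power2_eq_square)
  hence "Tr x * (Tr x - 1) = 0" by (simp add: algebra_simps)
  thus ?thesis by auto
qed

lemma Tr_frob: assumes "x \<in> FF" shows "Tr (x^(2^k)) = Tr x"
proof (induction k)
  case (Suc k)
  have "x^(2^Suc k) = (x^(2^k))^2" by (simp only: pp2)
  thus ?case using Tr_sq[OF F_pow[OF assms, of "2^k"]] Suc by simp
qed simp

lemma pair_nondeg: assumes "z \<in> FF" "\<And>x. x \<in> FF \<Longrightarrow> Tr (x * z) = 0" shows "z = 0"
proof (rule ccontr)
  assume "z \<noteq> 0"
  hence "Tr (inverse z * z) = 1" by (simp add: Tr_1)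
  with assms(2)[OF F_inv[OF assms(1)]] show False by simp
qed

lemma Tr_prod: assumes "z \<in> FF" "w \<in> FF" shows "(\<Sum>k<m. Tr (z^(2^k) * w)) = Tr z * Tr w"
proof -
  have "(\<Sum>k<m. Tr (z^(2^k) * w)) = (\<Sum>k<m. \<Sum>i<m. (z^(2^i))^(2^k) * w^(2^i))"
    unfolding Tr_def by (intro sum.cong refl) (simp add: power_mult_distrib pp add.commute)
  also have "\<dots> = (\<Sum>i<m. w^(2^i) * (\<Sum>k<m. (z^(2^i))^(2^k)))"
    by (subst sum.swap) (simp add: sum_distrib_left mult.commute)
  also have "\<dots> = (\<Sum>i<m. w^(2^i) * Tr z)"
    using Tr_frob[OF assms(1)] by (simp add: Tr_def[symmetric])
  also have "\<dots> = Tr z * Tr w" by (simp add: Tr_def sum_distrib_right mult.commute)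
  finally show ?thesis .
qed

lemma Tr_swap: assumes "z \<in> FF" "w \<in> FF" "k \<le> m"
  shows "Tr (w^(2^k) * z) = Tr (z^(2^(m-k)) * w)"
proof -
  have "(z^(2^(m-k)) * w)^(2^k) = z^(2^m) * w^(2^k)"
    using assms(3) by (simp add: power_mult_distrib pp)
  also have "\<dots> = w^(2^k) * z" using assms(1) by (simp add: inF mult.commute)
  finally show ?thesis using Tr_frob[OF F_mult[OF F_pow[OF assms(1), of "2^(m-k)"] assms(2)], of k] by simp
qed

definition G :: "'a \<Rightarrow> 'a" where "G z = (\<Sum>k\<in>{1..h}. Tr (z^(2^k+1)))"

lemma G_polar: assumes "z \<in> FF" "w \<in> FF"
  shows "G (z + w) = G z + G w + Tr z * Tr w + Tr (z * w)"
proof -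
  have e: "(z+w)^(2^k+1) = z^(2^k+1) + w^(2^k+1) + (z^(2^k) * w + w^(2^k) * z)" for k
    by (simp add: frob algebra_simps)
  have "G (z + w) = G z + G w + ((\<Sum>k\<in>{1..h}. Tr (z^(2^k) * w)) + (\<Sum>k\<in>{1..h}. Tr (w^(2^k) * z)))"
    unfolding G_def e by (simp add: Tr_add sum.distrib)
  also have "(\<Sum>k\<in>{1..h}. Tr (w^(2^k) * z)) = (\<Sum>k\<in>{1..h}. Tr (z^(2^(m-k)) * w))"
    by (intro sum.cong refl Tr_swap assms) (auto simp: mh)
  also have "\<dots> = (\<Sum>j\<in>{h+1..2*h}. Tr (z^(2^j) * w))"
    by (rule sum.reindex_bij_witness[of _ "\<lambda>j. m - j" "\<lambda>k. m - k"]) (auto simp: mh)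
  also have "(\<Sum>k\<in>{1..h}. Tr (z^(2^k) * w)) + \<dots> = (\<Sum>k\<in>{1..2*h}. Tr (z^(2^k) * w))"
    by (subst sum.union_disjoint[symmetric]) (auto intro: sum.cong)
  also have "\<dots> = Tr z * Tr w + Tr (z * w)"
  proof -
    have "{..<m} = insert 0 {1..2*h}" by (auto simp: mh)
    hence "(\<Sum>k<m. Tr (z^(2^k) * w)) = Tr (z * w) + (\<Sum>k\<in>{1..2*h}. Tr (z^(2^k) * w))"
      by simp
    thus ?thesis using Tr_prod[OF assms] by (metis add.assoc add.commute add_self add_0)
  qed
  finally show ?thesis by (simp add: add.assoc)
qed

lemma G01: "z \<in> FF \<Longrightarrow> G z \<in> {0,1}"
  unfolding G_def by (intro b01_sum Tr01 F_pow)

end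



locale kerdock2 = kerdock FF m h for FF :: "'a::field set" and m h +
  assumes finF: "finite FF"
begin

definition PP :: "('a \<times> 'a) set" where "PP = FF \<times> {0,1}"

lemma finPP: "finite PP" using finF by (simp add: PP_def)
lemma PP_add: "p \<in> PP \<Longrightarrow> q \<in> PP \<Longrightarrow> p + q \<in> PP"
  by (auto simp: PP_def F_add)
lemma PP_0: "0 \<in> PP" by (simp add: PP_def zero_prod_def F_0)
lemma pp_self: "(p::'a\<times>'a) + p = 0" by (simp add: plus_prod_def zero_prod_def)
lemma pp_cancel: "(p::'a\<times>'a) + q + q = p" by (metis add.assoc pp_self add.right_neutral)
lemma pp_cancel2: "(p::'a\<times>'a) + (p + q) = q" by (metis add.assoc pp_self add.left_neutral)

lemma char_sum_zero:
  fixes f :: "'a \<times> 'a \<Rightarrow> 'a"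
  assumes add: "\<And>p q. p \<in> PP \<Longrightarrow> q \<in> PP \<Longrightarrow> f (p + q) = f p + f q"
    and b: "\<And>p. p \<in> PP \<Longrightarrow> f p \<in> {0,1}"
    and p0: "p0 \<in> PP" "f p0 \<noteq> 0"
  shows "(\<Sum>p\<in>PP. sg (f p)) = 0"
proof -
  have f1: "f p0 = 1" using b[OF p0(1)] p0(2) by auto
  have "(\<Sum>p\<in>PP. sg (f p)) = (\<Sum>p\<in>PP. sg (f (p + p0)))"
    by (rule sum.reindex_bij_witness[of _ "\<lambda>p. p + p0" "\<lambda>p. p + p0"])
       (auto simp: pp_cancel PP_add p0)
  also have "\<dots> = (\<Sum>p\<in>PP. - sg (f p))"
  proof (intro sum.cong refl)
    fix p assume p: "p \<in> PP"
    have "f (p + p0) = f p + 1" using add[OF p p0(1)] f1 by simp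
    moreover have "f p = 0 \<or> f p = 1" using b[OF p] by auto
    ultimately show "sg (f (p + p0)) = - sg (f p)" by (auto simp: sg_def)
  qed
  finally show ?thesis by (simp add: sum_negf)
qed

lemma char_sum:
  fixes f :: "'a \<times> 'a \<Rightarrow> 'a"
  assumes add: "\<And>p q. p \<in> PP \<Longrightarrow> q \<in> PP \<Longrightarrow> f (p + q) = f p + f q"
    and b: "\<And>p. p \<in> PP \<Longrightarrow> f p \<in> {0,1}"
  shows "(\<Sum>p\<in>PP. sg (f p)) = (if \<forall>p\<in>PP. f p = 0 then real (card PP) else 0)"
proof (cases "\<forall>p\<in>PP. f p = 0")
  case True thus ?thesis by (simp add: sg_def)
next
  case False
  then obtain p0 where "p0 \<in> PP" "f p0 \<noteq> 0" by auto
  from char_sum_zero[OF add b this] False show ?thesis by auto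
qed

lemma gauss:
  fixes R :: "'a \<times> 'a \<Rightarrow> 'a"
  assumes R01: "\<And>p. p \<in> PP \<Longrightarrow> R p \<in> {0,1}" and R0: "R 0 = 0"
    and Dadd: "\<And>p p' q. p \<in> PP \<Longrightarrow> p' \<in> PP \<Longrightarrow> q \<in> PP \<Longrightarrow>
        R (p + p' + q) + R (p + p') + R q = (R (p + q) + R p + R q) + (R (p' + q) + R p' + R q)"
    and nondeg: "\<And>q. q \<in> PP \<Longrightarrow> (\<forall>p\<in>PP. R (p + q) + R p + R q = 0) \<Longrightarrow> q = 0"
  shows "(\<Sum>p\<in>PP. sg (R p))^2 = real (card PP)"
proof -
  define D where "D p q = R (p + q) + R p + R q" for p q
  have D01: "D p q \<in> {0,1}" if "p \<in> PP" "q \<in> PP" for p q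
    unfolding D_def by (intro b01_add R01 PP_add that)
  have Rsplit: "sg (R (p + q)) = sg (R p) * sg (R q) * sg (D p q)" if "p \<in> PP" "q \<in> PP" for p q
  proof -
    have "R (p + q) = (R p + R q) + D p q" by (simp add: D_def algebra_simps two)
    moreover have "R p \<in> {0,1}" "R q \<in> {0,1}" "D p q \<in> {0,1}" using that R01 D01 by auto
    ultimately show ?thesis using sg_add b01_add by metis
  qed
  have inner: "(\<Sum>p\<in>PP. sg (D p q)) = (if q = 0 then real (card PP) else 0)" if q: "q \<in> PP" for q
  proof -
    have "(\<Sum>p\<in>PP. sg (D p q)) = (if \<forall>p\<in>PP. D p q = 0 then real (card PP) else 0)"
    proof (rule char_sum)
      show "D (p + p') q = D p q + D p' q" if "p \<in> PP" "p' \<in> PP" for p p'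
        unfolding D_def using Dadd[OF that q] .
      show "D p q \<in> {0,1}" if "p \<in> PP" for p using D01[OF that q] .
    qed
    moreover have "(\<forall>p\<in>PP. D p q = 0) \<longleftrightarrow> q = 0"
      using nondeg[OF q] by (auto simp: D_def R0)
    ultimately show ?thesis by simp
  qed
  have "(\<Sum>p\<in>PP. sg (R p))^2 = (\<Sum>p\<in>PP. \<Sum>q\<in>PP. sg (R p) * sg (R q))"
    by (simp add: power2_eq_square sum_product)
  also have "\<dots> = (\<Sum>p\<in>PP. \<Sum>q\<in>PP. sg (R p) * sg (R (p + q)))"
  proof (rule sum.cong[OF refl])
    fix p assume p: "p \<in> PP"
    show "(\<Sum>q\<in>PP. sg (R p) * sg (R q)) = (\<Sum>q\<in>PP. sg (R p) * sg (R (p + q)))"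
      by (rule sum.reindex_bij_witness[of _ "\<lambda>q. p + q" "\<lambda>q. p + q"])
         (simp_all add: p PP_add pp_cancel2)
  qed
  also have "\<dots> = (\<Sum>p\<in>PP. \<Sum>q\<in>PP. sg (R q) * sg (D p q))"
    by (intro sum.cong refl) (simp add: Rsplit mult.assoc[symmetric] sg_sq)
  also have "\<dots> = (\<Sum>q\<in>PP. sg (R q) * (\<Sum>p\<in>PP. sg (D p q)))"
    by (subst sum.swap) (simp add: sum_distrib_left)
  also have "\<dots> = (\<Sum>q\<in>PP. if q = 0 then sg (R q) * real (card PP) else 0)"
    by (intro sum.cong refl) (simp add: inner)
  also have "\<dots> = real (card PP)"
    using PP_0 finPP by (simp add: R0 sg_def)
  finally show ?thesis .
qed

end



context kerdock2
begin

definition sq :: "'a \<Rightarrow> 'a" where "sq a = a^(2^(m-1))"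

lemma sq_F: "a \<in> FF \<Longrightarrow> sq a \<in> FF" unfolding sq_def by (rule F_pow)
lemma sq_sq: assumes "a \<in> FF" shows "sq a * sq a = a"
proof -
  have "sq a * sq a = a^(2^Suc (m-1))" unfolding sq_def using pp2[of a "m-1"] by (simp add: power2_eq_square)
  also have "Suc (m-1) = m" by (simp add: mh)
  finally show ?thesis using assms by (simp add: inF)
qed
lemma sq_add: "sq (a + b) = sq a + sq b" unfolding sq_def by (rule frob)
lemma sq_inj: "a \<in> FF \<Longrightarrow> b \<in> FF \<Longrightarrow> sq a = sq b \<Longrightarrow> a = b" by (metis sq_sq)

lemma Tr_scal: "c \<in> {0,1} \<Longrightarrow> Tr (c * z) = c * Tr z" by auto

definition Q :: "'a \<Rightarrow> 'a \<times> 'a \<Rightarrow> 'a" where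
  "Q a p = G (sq a * fst p) + snd p * Tr (sq a * fst p)"
definition L :: "'a \<times> 'a \<Rightarrow> 'a \<times> 'a \<Rightarrow> 'a" where
  "L w p = Tr (fst p * fst w) + snd p * snd w"
definition E :: "'a \<Rightarrow> 'a \<times> 'a \<Rightarrow> 'a \<times> 'a \<Rightarrow> 'a" where
  "E a p q = Tr (sq a * fst p) * Tr (sq a * fst q) + Tr (sq a * fst p * (sq a * fst q))
     + snd p * Tr (sq a * fst q) + snd q * Tr (sq a * fst p)"

lemma inPP: "p \<in> PP \<longleftrightarrow> fst p \<in> FF \<and> (snd p = 0 \<or> snd p = 1)"
  by (cases p) (auto simp: PP_def)

lemma Q01: "a \<in> FF \<Longrightarrow> p \<in> PP \<Longrightarrow> Q a p \<in> {0,1}"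
  unfolding Q_def by (intro b01_add b01_mult G01 Tr01 F_mult sq_F) (auto simp: inPP)

lemma L01: "w \<in> PP \<Longrightarrow> p \<in> PP \<Longrightarrow> L w p \<in> {0,1}"
  unfolding L_def by (intro b01_add b01_mult Tr01 F_mult) (auto simp: inPP)

lemma L_add1: "L w (p + q) = L w p + L w q"
  by (simp add: L_def Tr_add algebra_simps)
lemma L_add2: "L (w + w') p = L w p + L w' p"
  by (simp add: L_def Tr_add algebra_simps)
lemma L_0: "L w 0 = 0" by (simp add: L_def)
lemma G_0: "G 0 = 0" by (simp add: G_def zero_power)
lemma Q_0: "Q a 0 = 0" by (simp add: Q_def G_0)

lemma L_nondeg: assumes "w \<in> PP" "\<And>p. p \<in> PP \<Longrightarrow> L w p = 0" shows "w = 0"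
proof -
  have "L w (0,1) = 0" by (rule assms(2)) (simp add: inPP F_0)
  hence s: "snd w = 0" by (simp add: L_def)
  have "fst w = 0"
  proof (rule pair_nondeg)
    show "fst w \<in> FF" using assms(1) by (simp add: inPP)
    fix x assume "x \<in> FF"
    hence "L w (x,0) = 0" by (intro assms(2)) (simp add: inPP)
    thus "Tr (x * fst w) = 0" by (simp add: L_def)
  qed
  with s show ?thesis by (simp add: prod_eq_iff)
qed

lemma Q_polar: assumes "a \<in> FF" "p \<in> PP" "q \<in> PP"
  shows "Q a (p + q) + Q a p + Q a q = E a p q"
proof -
  define s where "s = sq a"
  have sF: "s \<in> FF" using assms by (simp add: s_def sq_F)
  have xF: "s * fst p \<in> FF" "s * fst q \<in> FF" using assms sF by (auto simp: inPP intro: F_mult)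
  have g: "G (s * fst p + s * fst q) = G (s * fst p) + G (s * fst q) + Tr (s * fst p) * Tr (s * fst q) + Tr (s * fst p * (s * fst q))"
    by (rule G_polar[OF xF])
  have "Q a (p + q) = G (s * fst p + s * fst q) + (snd p + snd q) * (Tr (s * fst p) + Tr (s * fst q))"
    by (simp add: Q_def s_def[symmetric] distrib_left Tr_add)
  hence hQ: "Q a (p + q) = G (s * fst p) + G (s * fst q) + Tr (s * fst p) * Tr (s * fst q) + Tr (s * fst p * (s * fst q)) + (snd p + snd q) * (Tr (s * fst p) + Tr (s * fst q))"
    unfolding g .
  have hp: "Q a p = G (s * fst p) + snd p * Tr (s * fst p)" by (simp add: Q_def s_def)
  have hq: "Q a q = G (s * fst q) + snd q * Tr (s * fst q)" by (simp add: Q_def s_def)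
  have he: "E a p q = Tr (s * fst p) * Tr (s * fst q) + Tr (s * fst p * (s * fst q))
     + snd p * Tr (s * fst q) + snd q * Tr (s * fst p)" by (simp add: E_def s_def)
  have "Q a (p + q) + Q a p + Q a q = E a p q + 2 * (G (s * fst p) + G (s * fst q) + snd p * Tr (s * fst p) + snd q * Tr (s * fst q))"
    unfolding hQ hp hq he by (simp add: algebra_simps)
  thus ?thesis by (simp add: two)
qed

lemma E_add: "E a (p + p') q = E a p q + E a p' q"
  by (simp add: E_def Tr_add algebra_simps)

lemma E_nondeg: assumes "a \<in> FF" "b \<in> FF" "a \<noteq> b" "q \<in> PP"
    and z: "\<And>p. p \<in> PP \<Longrightarrow> E a p q + E b p q = 0"
  shows "q = 0"
proof -
  define s where "s = sq a"
  define t where "t = sq b"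
  define r where "r = s + t"
  define y where "y = fst q"
  define \<delta> where "\<delta> = snd q"
  have sF: "s \<in> FF" and tF: "t \<in> FF" using assms by (auto simp: s_def t_def sq_F)
  have rF: "r \<in> FF" using sF tF by (simp add: r_def F_add)
  have yF: "y \<in> FF" and d01: "\<delta> = 0 \<or> \<delta> = 1" using assms(4) by (auto simp: inPP y_def \<delta>_def)
  have r0: "r \<noteq> 0"
  proof
    assume "r = 0"
    hence "s = t" by (simp add: r_def) (metis add_self add_left_cancel)
    hence "a = b" using sq_inj assms by (simp add: s_def t_def)
    thus False using assms by simp
  qed
  define \<alpha> where "\<alpha> = Tr (s * y)"
  define \<beta> where "\<beta> = Tr (t * y)"
  have a01: "\<alpha> \<in> {0,1}" unfolding \<alpha>_def by (rule Tr01[OF F_mult[OF sF yF]])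
  have b01: "\<beta> \<in> {0,1}" unfolding \<beta>_def by (rule Tr01[OF F_mult[OF tF yF]])
  have "E a (0,1) q + E b (0,1) q = 0" by (rule z) (simp add: inPP F_0)
  hence "\<alpha> + \<beta> = 0" by (simp add: E_def \<alpha>_def \<beta>_def s_def t_def y_def)
  hence ab: "\<alpha> = \<beta>" by (metis add_self add_left_cancel)
  have rty: "Tr (r * y) = 0" using \<open>\<alpha> + \<beta> = 0\<close>
    by (simp add: r_def distrib_right Tr_add \<alpha>_def \<beta>_def)
  define zz where "zz = (\<alpha> + \<delta>) * r + r * r * y"
  have zzF: "zz \<in> FF" unfolding zz_def using a01 d01 rF yF F_0 F_1
    by (intro F_add F_mult) auto
  have "zz = 0"
  proof (rule pair_nondeg[OF zzF])
    fix x assume x: "x \<in> FF"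
    have "E a (x,0) q + E b (x,0) q = 0" by (rule z) (simp add: inPP x)
    hence "Tr (s*x) * \<alpha> + Tr (s * x * (s * y)) + \<delta> * Tr (s * x)
        + (Tr (t*x) * \<beta> + Tr (t * x * (t * y)) + \<delta> * Tr (t * x)) = 0"
      by (simp add: E_def \<alpha>_def \<beta>_def s_def t_def y_def \<delta>_def)
    moreover have "Tr (x * zz) = Tr (s*x) * \<alpha> + Tr (s * x * (s * y)) + \<delta> * Tr (s * x)
        + (Tr (t*x) * \<beta> + Tr (t * x * (t * y)) + \<delta> * Tr (t * x))"
    proof -
      have "x * zz = \<alpha> * (s * x) + \<delta> * (s * x) + \<alpha> * (t * x) + \<delta> * (t * x)
                   + (s * x * (s * y) + t * x * (t * y))"
      proof -
        have "x * zz = \<alpha> * (s * x) + \<delta> * (s * x) + \<alpha> * (t * x) + \<delta> * (t * x)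
                   + (s * x * (s * y) + t * x * (t * y)) + 2 * (x * s * t * y)"
          unfolding zz_def r_def by (simp add: algebra_simps)
        thus ?thesis by (simp add: two)
      qed
      hence "Tr (x * zz) = \<alpha> * Tr (s * x) + \<delta> * Tr (s * x) + \<alpha> * Tr (t * x) + \<delta> * Tr (t * x)
                   + (Tr (s * x * (s * y)) + Tr (t * x * (t * y)))"
        using a01 d01 by (simp add: Tr_add Tr_scal)
      thus ?thesis using ab by (simp add: algebra_simps)
    qed
    ultimately show "Tr (x * zz) = 0" by simp
  qed
  hence "r * ((\<alpha> + \<delta>) + r * y) = 0" unfolding zz_def by (simp add: algebra_simps)
  hence ry: "r * y = \<alpha> + \<delta>" using r0 by (metis add_self add_left_cancel mult_eq_0_iff)
  hence "Tr (\<alpha> + \<delta>) = 0" using rty by simp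
  hence "\<alpha> + \<delta> = 0" using a01 d01 by (auto simp: Tr_1 Tr_add)
  hence "y = 0" using ry r0 by simp
  hence "\<alpha> = 0" by (simp add: \<alpha>_def)
  hence "\<delta> = 0" using \<open>\<alpha> + \<delta> = 0\<close> by simp
  show "q = 0" using \<open>y = 0\<close> \<open>\<delta> = 0\<close> by (simp add: y_def \<delta>_def prod_eq_iff)
qed

end



context kerdock2
begin

lemma sgQL: "a \<in> FF \<Longrightarrow> w \<in> PP \<Longrightarrow> p \<in> PP \<Longrightarrow> sg (Q a p + L w p) = sg (Q a p) * sg (L w p)"
  using Q01 L01 sg_add by blast

lemma ortho: assumes "a \<in> FF" "w \<in> PP" "w' \<in> PP"
  shows "(\<Sum>p\<in>PP. sg (Q a p + L w p) * sg (Q a p + L w' p)) = (if w = w' then real (card PP) else 0)"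
proof -
  have ww: "w + w' \<in> PP" using assms PP_add by blast
  have "(\<Sum>p\<in>PP. sg (Q a p + L w p) * sg (Q a p + L w' p)) = (\<Sum>p\<in>PP. sg (L (w + w') p))"
  proof (rule sum.cong[OF refl])
    fix p assume p: "p \<in> PP"
    have "sg (Q a p + L w p) * sg (Q a p + L w' p) = (sg (Q a p) * sg (Q a p)) * (sg (L w p) * sg (L w' p))"
      using sgQL[OF assms(1,2) p] sgQL[OF assms(1,3) p] by simp
    also have "\<dots> = sg (L w p) * sg (L w' p)" by (simp only: sg_sq mult_1_left)
    also have "\<dots> = sg (L w p + L w' p)" using sg_add L01 assms p by simp
    finally show "sg (Q a p + L w p) * sg (Q a p + L w' p) = sg (L (w + w') p)" by (simp add: L_add2)
  qed
  also have "\<dots> = (if \<forall>p\<in>PP. L (w + w') p = 0 then real (card PP) else 0)"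
    by (rule char_sum) (simp add: L_add1, rule L01[OF ww])
  also have "(\<forall>p\<in>PP. L (w + w') p = 0) \<longleftrightarrow> w = w'"
  proof
    assume "\<forall>p\<in>PP. L (w + w') p = 0"
    hence "w + w' = 0" using L_nondeg[OF ww] by blast
    thus "w = w'" by (metis pp_cancel add_0)
  next
    assume "w = w'" thus "\<forall>p\<in>PP. L (w + w') p = 0" by (simp add: pp_self L_def)
  qed
  finally show ?thesis .
qed

lemma gauss_inst: assumes "a \<in> FF" "b \<in> FF" "a \<noteq> b" "w \<in> PP" "w' \<in> PP"
  shows "(\<Sum>p\<in>PP. sg (Q a p + L w p) * sg (Q b p + L w' p))^2 = real (card PP)"
proof -
  define R where "R p = (Q a p + L w p) + (Q b p + L w' p)" for p
  have R01: "R p \<in> {0,1}" if "p \<in> PP" for p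
    unfolding R_def using that assms by (intro b01_add Q01 L01)
  have eq: "(\<Sum>p\<in>PP. sg (Q a p + L w p) * sg (Q b p + L w' p)) = (\<Sum>p\<in>PP. sg (R p))"
    unfolding R_def using assms Q01 L01 b01_add sg_add by (intro sum.cong refl) (metis)
  have pol: "R (p + q) + R p + R q = E a p q + E b p q" if "p \<in> PP" "q \<in> PP" for p q
  proof -
    have "R (p + q) + R p + R q = (Q a (p + q) + Q a p + Q a q) + (Q b (p + q) + Q b p + Q b q)
         + 2 * (L w p + L w q + L w' p + L w' q)"
      unfolding R_def L_add1 by (simp add: algebra_simps)
    thus ?thesis using Q_polar assms that by (simp add: two)
  qed
  have "(\<Sum>p\<in>PP. sg (R p))^2 = real (card PP)"
  proof (rule gauss)
    show "\<And>p. p \<in> PP \<Longrightarrow> R p \<in> {0,1}" by (rule R01)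
    show "R 0 = 0" by (simp add: R_def Q_0 L_0)
    fix p p' q assume pp: "p \<in> PP" "p' \<in> PP" "q \<in> PP"
    show "R (p + p' + q) + R (p + p') + R q = (R (p + q) + R p + R q) + (R (p' + q) + R p' + R q)"
      using pol[OF PP_add[OF pp(1,2)] pp(3)] pol[OF pp(1,3)] pol[OF pp(2,3)]
      by (simp add: E_add algebra_simps)
  next
    fix q assume q: "q \<in> PP" "\<forall>p\<in>PP. R (p + q) + R p + R q = 0"
    show "q = 0"
      by (rule E_nondeg[OF assms(1,2,3) q(1)]) (use q pol in auto)
  qed
  thus ?thesis using eq by simp
qed

end



context kerdock2
begin

definition OS :: "'a option set" where "OS = insert None (Some ` FF)"
definition II where "II = PP <+> OS"
definition JJ where "JJ = (FF \<times> PP) <+> PP"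

definition rr :: real where "rr = sqrt (real (card PP))"
definition al :: real where "al = sqrt (rr / (rr + 1))"
definition be :: real where "be = sqrt (1 / (rr + 1))"

definition vec :: "('a \<times> ('a \<times> 'a)) + ('a \<times> 'a) \<Rightarrow> ('a \<times> 'a) + 'a option \<Rightarrow> real" where
  "vec j i = (case j of
      Inl (a, w) \<Rightarrow> (case i of Inl p \<Rightarrow> al / rr * sg (Q a p + L w p)
                               | Inr ot \<Rightarrow> (if ot = Some a then be else 0))
    | Inr q \<Rightarrow> (case i of Inl p \<Rightarrow> (if p = q then al else 0)
                          | Inr ot \<Rightarrow> (if ot = None then be else 0)))"

definition ipI :: "(('a \<times> 'a) + 'a option \<Rightarrow> real) \<Rightarrow> _ \<Rightarrow> real" where
  "ipI u v = (\<Sum>i\<in>II. u i * v i)"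

lemma finOS: "finite OS" using finF by (simp add: OS_def)
lemma finII: "finite II" using finPP finOS by (simp add: II_def)
lemma finJJ: "finite JJ" using finPP finF by (simp add: JJ_def)

lemma ipI_split: "ipI u v = (\<Sum>p\<in>PP. u (Inl p) * v (Inl p)) + (\<Sum>ot\<in>OS. u (Inr ot) * v (Inr ot))"
  unfolding ipI_def II_def by (subst sum.Plus[OF finPP finOS]) (simp add: comp_def)

lemma cardPP_pos: "card PP > 0" using finPP PP_0 by (auto simp: card_gt_0_iff)
lemma rr_pos: "rr > 0" using cardPP_pos by (simp add: rr_def)
lemma rr_sq: "rr * rr = real (card PP)" by (simp add: rr_def)
lemma al_sq: "al * al = rr / (rr + 1)" using rr_pos by (simp add: al_def)
lemma be_sq: "be * be = 1 / (rr + 1)" using rr_pos by (simp add: be_def)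
lemma albe: "al * al + be * be = 1" using rr_pos by (simp add: al_sq be_sq field_simps)
lemma al_rr: "al * al / rr = be * be"
proof -
  have "rr + 1 \<noteq> 0" "rr \<noteq> 0" "rr + rr * rr \<noteq> 0" using rr_pos by (auto, smt (verit) mult_pos_pos)
  thus ?thesis by (simp add: al_sq be_sq field_simps)
qed

lemma sg_abs: "\<bar>sg x\<bar> = 1" by (simp add: sg_def)

lemma O_delta: "a \<in> FF \<Longrightarrow> b \<in> FF \<Longrightarrow>
  (\<Sum>ot\<in>OS. (if ot = Some a then be else 0) * (if ot = Some b then be else (0::real))) = (if a = b then be * be else 0)"
proof -
  assume ab: "a \<in> FF" "b \<in> FF"
  have "(\<Sum>ot\<in>OS. (if ot = Some a then be else 0) * (if ot = Some b then be else (0::real)))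
     = (\<Sum>ot\<in>OS. if ot = Some a then (if a = b then be * be else 0) else 0)"
    by (intro sum.cong refl) auto
  also have "\<dots> = (if a = b then be * be else 0)" using ab finOS by (simp add: OS_def)
  finally show ?thesis .
qed

lemma O_none: "(\<Sum>ot\<in>OS. (if ot = None then be else 0) * (if ot = None then be else (0::real))) = be * be"
proof -
  have "(\<Sum>ot\<in>OS. (if ot = None then be else 0) * (if ot = None then be else (0::real)))
      = (\<Sum>ot\<in>OS. if ot = None then be * be else 0)" by (intro sum.cong refl) auto
  also have "\<dots> = be * be" using finOS by (simp add: OS_def)
  finally show ?thesis .
qed

lemma O_mixed: "(\<Sum>ot\<in>OS. (if ot = Some a then be else 0) * (if ot = None then be else (0::real))) = 0"
  by (intro sum.neutral) auto

lemma P_delta: "q \<in> PP \<Longrightarrow> q' \<in> PP \<Longrightarrow>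
  (\<Sum>p\<in>PP. (if p = q then al else 0) * (if p = q' then al else (0::real))) = (if q = q' then al * al else 0)"
proof -
  assume q: "q \<in> PP" "q' \<in> PP"
  have "(\<Sum>p\<in>PP. (if p = q then al else 0) * (if p = q' then al else (0::real)))
      = (\<Sum>p\<in>PP. if p = q then (if q = q' then al * al else 0) else 0)" by (intro sum.cong refl) auto
  also have "\<dots> = (if q = q' then al * al else 0)" using q finPP by simp
  finally show ?thesis .
qed

lemma P_mixed: "q \<in> PP \<Longrightarrow>
  (\<Sum>p\<in>PP. (al / rr * sg (Q a p + L w p)) * (if p = q then al else (0::real))) = al / rr * sg (Q a q + L w q) * al"
proof -
  assume q: "q \<in> PP"
  have "(\<Sum>p\<in>PP. (al / rr * sg (Q a p + L w p)) * (if p = q then al else (0::real)))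
      = (\<Sum>p\<in>PP. if p = q then al / rr * sg (Q a q + L w q) * al else 0)" by (intro sum.cong refl) auto
  also have "\<dots> = al / rr * sg (Q a q + L w q) * al" using q finPP by simp
  finally show ?thesis .
qed

lemma P_main: "(\<Sum>p\<in>PP. (al / rr * sg (Q a p + L w p)) * (al / rr * sg (Q b p + L w' p)))
   = al * al / real (card PP) * (\<Sum>p\<in>PP. sg (Q a p + L w p) * sg (Q b p + L w' p))"
  by (simp add: sum_distrib_left rr_sq[symmetric] algebra_simps)

lemma vec_simps:
  "vec (Inl (a, w)) (Inl p) = al / rr * sg (Q a p + L w p)"
  "vec (Inl (a, w)) (Inr ot) = (if ot = Some a then be else 0)"
  "vec (Inr q) (Inl p) = (if p = q then al else 0)"
  "vec (Inr q) (Inr ot) = (if ot = None then be else 0)"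
  by (simp_all add: vec_def)

lemma ip_LL: assumes "a \<in> FF" "b \<in> FF"
  shows "ipI (vec (Inl (a, w))) (vec (Inl (b, w'))) =
    al * al / real (card PP) * (\<Sum>p\<in>PP. sg (Q a p + L w p) * sg (Q b p + L w' p)) + (if a = b then be * be else 0)"
  unfolding ipI_split vec_simps P_main O_delta[OF assms] ..

lemma ip_RR: assumes "q \<in> PP" "q' \<in> PP"
  shows "ipI (vec (Inr q)) (vec (Inr q')) = (if q = q' then al * al else 0) + be * be"
  unfolding ipI_split vec_simps P_delta[OF assms] O_none ..

lemma ip_LR: assumes "q \<in> PP"
  shows "ipI (vec (Inl (a, w))) (vec (Inr q)) = al / rr * sg (Q a q + L w q) * al"
  unfolding ipI_split vec_simps P_mixed[OF assms] O_mixed by simp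

lemma ip_RL: assumes "q \<in> PP"
  shows "ipI (vec (Inr q)) (vec (Inl (a, w))) = al / rr * sg (Q a q + L w q) * al"
  using ip_LR[OF assms, of a w] unfolding ipI_def by (simp add: mult.commute)

definition cc :: real where "cc = be * be"

lemma cc_ne1: "cc \<noteq> 1" using rr_pos by (simp add: cc_def be_sq)

lemma vec_ip: assumes "j \<in> JJ" "j' \<in> JJ"
  shows "ipI (vec j) (vec j') = (if j = j' then 1 else ipI (vec j) (vec j'))"
    and "j \<noteq> j' \<Longrightarrow> \<bar>ipI (vec j) (vec j')\<bar> = cc"
proof -
  show "ipI (vec j) (vec j') = (if j = j' then 1 else ipI (vec j) (vec j'))"
  proof (cases "j = j'")
    case True
    show ?thesis
    proof (cases j)
      case (Inl aw)
      obtain a w where aw: "aw = (a, w)" by (cases aw)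
      have a: "a \<in> FF" "w \<in> PP" using assms(1) Inl aw by (auto simp: JJ_def)
      have "ipI (vec j) (vec j) = al * al / real (card PP) * real (card PP) + be * be"
        using Inl aw a by (simp add: ip_LL ortho)
      also have "\<dots> = 1" using cardPP_pos albe by simp
      finally show ?thesis using True by simp
    next
      case (Inr q)
      have q: "q \<in> PP" using assms(1) Inr by (auto simp: JJ_def)
      have "ipI (vec j) (vec j) = al * al + be * be"
        using Inr q by (simp add: ip_RR)
      thus ?thesis using True albe by simp
    qed
  qed simp
  assume ne: "j \<noteq> j'"
  show "\<bar>ipI (vec j) (vec j')\<bar> = cc"
  proof (cases j)
    case (Inl aw)
    obtain a w where aw: "aw = (a, w)" by (cases aw)
    have a: "a \<in> FF" "w \<in> PP" using assms(1) Inl aw by (auto simp: JJ_def)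
    show ?thesis
    proof (cases j')
      case (Inl bw)
      obtain b w' where bw: "bw = (b, w')" by (cases bw)
      have b: "b \<in> FF" "w' \<in> PP" using assms(2) Inl bw by (auto simp: JJ_def)
      show ?thesis
      proof (cases "a = b")
        case True
        hence "w \<noteq> w'" using ne \<open>j = Inl aw\<close> Inl aw bw by auto
        hence "ipI (vec j) (vec j') = be * be"
          using \<open>j = Inl aw\<close> Inl aw bw a b True by (simp add: ip_LL ortho)
        thus ?thesis by (simp add: cc_def)
      next
        case False
        define S where "S = (\<Sum>p\<in>PP. sg (Q a p + L w p) * sg (Q b p + L w' p))"
        have S2: "S^2 = real (card PP)" unfolding S_def by (rule gauss_inst[OF a(1) b(1) False a(2) b(2)])
        have absS: "\<bar>S\<bar> = rr" unfolding rr_def using S2 by (metis real_sqrt_abs)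
        have "ipI (vec j) (vec j') = al * al / real (card PP) * S"
          using \<open>j = Inl aw\<close> Inl aw bw a b False by (simp add: ip_LL S_def)
        hence "\<bar>ipI (vec j) (vec j')\<bar> = al * al / (rr * rr) * rr"
          using absS rr_sq by (simp add: abs_mult)
        also have "\<dots> = al * al / rr" using rr_pos by simp
        finally show ?thesis by (simp add: al_rr cc_def)
      qed
    next
      case (Inr q)
      have q: "q \<in> PP" using assms(2) Inr by (auto simp: JJ_def)
      have "ipI (vec j) (vec j') = al / rr * sg (Q a q + L w q) * al"
        using \<open>j = Inl aw\<close> Inr aw q by (simp add: ip_LR)
      hence "\<bar>ipI (vec j) (vec j')\<bar> = al * al / rr"
        using rr_pos by (simp add: abs_mult sg_abs)
      thus ?thesis by (simp add: al_rr cc_def)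
    qed
  next
    case (Inr q)
    have q: "q \<in> PP" using assms(1) Inr by (auto simp: JJ_def)
    show ?thesis
    proof (cases j')
      case (Inl bw)
      obtain b w' where bw: "bw = (b, w')" by (cases bw)
      have b: "b \<in> FF" "w' \<in> PP" using assms(2) Inl bw by (auto simp: JJ_def)
      have "ipI (vec j) (vec j') = al / rr * sg (Q b q + L w' q) * al"
        using \<open>j = Inr q\<close> Inl bw q by (simp add: ip_RL)
      hence "\<bar>ipI (vec j) (vec j')\<bar> = al * al / rr"
        using rr_pos by (simp add: abs_mult sg_abs)
      thus ?thesis by (simp add: al_rr cc_def)
    next
      case (Inr q')
      have q': "q' \<in> PP" using assms(2) Inr by (auto simp: JJ_def)
      have "q \<noteq> q'" using ne \<open>j = Inr q\<close> Inr by auto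
      hence "ipI (vec j) (vec j') = be * be"
        using \<open>j = Inr q\<close> Inr q q' by (simp add: ip_RR)
      thus ?thesis by (simp add: cc_def)
    qed
  qed
qed

end



lemma transport:
  fixes vec :: "'j \<Rightarrow> 'i \<Rightarrow> real" and I :: "'i set" and J :: "'j set"
  assumes finI: "finite I" and finJ: "finite J" and cI: "card I = n"
    and one: "\<And>j. j \<in> J \<Longrightarrow> (\<Sum>i\<in>I. vec j i * vec j i) = 1"
    and cc: "\<And>j j'. j \<in> J \<Longrightarrow> j' \<in> J \<Longrightarrow> j \<noteq> j' \<Longrightarrow> \<bar>\<Sum>i\<in>I. vec j i * vec j' i\<bar> = c"
    and c1: "c \<noteq> 1"
  shows "\<exists>V. finite V \<and> equiangular_lines n V \<and> card V = card J"
proof -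
  obtain g where g: "bij_betw g {0..<n} I" using ex_bij_betw_nat_finite[OF finI] cI by blast
  define emb where "emb j = (\<lambda>k. if k < n then vec j (g k) else 0)" for j
  have ipe: "ip n (emb j) (emb j') = (\<Sum>i\<in>I. vec j i * vec j' i)" for j j'
  proof -
    have "ip n (emb j) (emb j') = (\<Sum>k\<in>{0..<n}. vec j (g k) * vec j' (g k))"
      unfolding ip_def emb_def by (simp add: atLeast0LessThan)
    also have "\<dots> = (\<Sum>i\<in>I. vec j i * vec j' i)"
      by (rule sum.reindex_bij_betw[OF g])
    finally show ?thesis .
  qed
  have inj: "inj_on emb J"
  proof
    fix j j' assume jj: "j \<in> J" "j' \<in> J" "emb j = emb j'"
    show "j = j'"
    proof (rule ccontr)
      assume "j \<noteq> j'"
      hence "\<bar>ip n (emb j) (emb j')\<bar> = c" using cc[OF jj(1,2)] by (simp only: ipe) simp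
      moreover have "ip n (emb j) (emb j') = 1" using jj(3) ipe one[OF jj(1)] by (metis)
      ultimately show False using c1 by simp
    qed
  qed
  define V where "V = emb ` J"
  have "equiangular_lines n V"
    unfolding equiangular_lines_def
  proof (intro conjI ballI impI exI[of _ c])
    show "V \<subseteq> rvec n" by (auto simp: V_def rvec_def emb_def)
    fix v assume "v \<in> V"
    then obtain j where j: "j \<in> J" "v = emb j" by (auto simp: V_def)
    show "ip n v v = 1" using j ipe one by simp
    fix w assume "w \<in> V" "v \<noteq> w"
    then obtain j' where j': "j' \<in> J" "w = emb j'" by (auto simp: V_def)
    have ne: "j \<noteq> j'" using j j' \<open>v \<noteq> w\<close> by auto
    show "\<bar>ip n v w\<bar> = c" using j j' ne cc ipe by simp
    show "w \<noteq> (\<lambda>k. - v k)"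
    proof
      assume w: "w = (\<lambda>k. - v k)"
      have "ip n v w = - ip n v v" unfolding w ip_def by (simp add: sum_negf)
      hence "\<bar>ip n v w\<bar> = 1" using j ipe one by simp
      thus False using j j' ne cc ipe c1 by simp
    qed
  qed
  moreover have "card V = card J" unfolding V_def using card_image[OF inj] .
  moreover have "finite V" using finJ by (simp add: V_def)
  ultimately show ?thesis by blast
qed

theorem theorem2:
  fixes t :: nat
  assumes "t \<ge> 1"
  defines "n \<equiv> 3 * 2 ^ (2 * t - 1) + 1"
  shows "\<exists>V. finite V \<and> equiangular_lines n V \<and>
           real (card V) = 2 / 9 * (real n - 1) * (real n + 2)"
proof -
  define m where "m = 2 * t - 1"
  define N :: nat where "N = 2 ^ m"
  define FF where "FF = {x::K. x ^ (2^m) = x}"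
  have m1: "m \<ge> 1" using assms by (simp add: m_def)
  have Nev: "even N" "N \<ge> 2" using m1 unfolding N_def
    by (simp_all add: self_le_power)
  have cF: "card FF = N" unfolding FF_def N_def using card_roots_K[OF Nev[unfolded N_def]] .
  have finF: "finite FF" using cF Nev by (metis card.infinite not_numeral_le_zero)
  interpret kerdock2 FF m "t - 1"
    by unfold_locales (use two_K finF assms in \<open>auto simp: m_def FF_def\<close>)
  have zo: "card {0::K, 1} = 2" by simp
  have cPP: "card PP = 2 * N" unfolding PP_def using cF finF by (simp add: card_cartesian_product)
  have cOS: "card OS = N + 1" unfolding OS_def using cF finF
    by (simp add: card_image inj_on_def)
  have cII: "card II = n" unfolding II_def using finPP finOS
    by (simp add: card_Plus cPP cOS n_def N_def m_def)
  have cJJ: "card JJ = N * (2 * N) + 2 * N" unfolding JJ_def using finPP finF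
    by (simp add: card_Plus card_cartesian_product cPP cF)
  obtain V where V: "finite V" "equiangular_lines n V" "card V = card JJ"
  proof -
    have "\<exists>V. finite V \<and> equiangular_lines n V \<and> card V = card JJ"
    proof (rule transport[OF finII finJJ cII, of vec cc])
      show "\<And>j. j \<in> JJ \<Longrightarrow> (\<Sum>i\<in>II. vec j i * vec j i) = 1"
        using vec_ip(1) unfolding ipI_def by simp
      show "\<And>j j'. j \<in> JJ \<Longrightarrow> j' \<in> JJ \<Longrightarrow> j \<noteq> j' \<Longrightarrow> \<bar>\<Sum>i\<in>II. vec j i * vec j' i\<bar> = cc"
        using vec_ip(2) unfolding ipI_def by simp
      show "cc \<noteq> 1" by (rule cc_ne1)
    qed
    thus ?thesis using that by blast
  qed
  have "real n = 3 * real N + 1" by (simp add: n_def N_def m_def)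
  hence "2 / 9 * (real n - 1) * (real n + 2) = real (N * (2 * N) + 2 * N)"
    by (simp add: field_simps)
  thus ?thesis using V cJJ by metis
qed


end
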